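(* Let $\psi(q)=|q|^{-\alpha}$ for $q\ne0$ with $\alpha\ge1$ and $\alpha\ne1$. Let $(P,Q)$ be a global solution of the Cucker–Smale model with velocity control described in the context, with non-collisional initial positions ($q_i^0\ne q_j^0$ for all $i\ne j$), and suppose that $(P,Q)$ exhibits flocking, i.e. $\sup_{t\ge0}\max_{i,j}|q_i(t)-q_j(t)|<\infty$ and $\lim_{t\to\infty}\max_{i,j}|p_i(t)-p_j(t)|=0$. Then \[ \inf_{t\ge0}\min_{\substack{i,j\in[N]\\ i\ne j}}|q_i(t)-q_j(t)|>0. \]
   Context: Let $N\ge1$, $d\ge1$, $\kappa>0$, $[N]=\{1,\dots,N\}$. The velocity control function $G:\mathbb R^d\to\mathbb R^d$ is $G(p)=g(|p|)\,p/|p|$ for $p\ne0$, $G(0)=0$, with $g\in C^1([0,\infty))$, $g(0)=0$, $0<m\le g'\le M$ on every compact interval (constants depending on the interval), and $g$ convex or concave on $(0,\infty)$. The model is, for $i\in[N]$, $t>0$: \[ \dot q_i=G(p_i),\qquad \dot p_i=\frac{\kappa}{N}\sum_{k=1}^N\psi(|q_k-q_i|)\big(G(p_k)-G(p_i)\big),\qquad (q_i,p_i)(0)=(q_i^0,p_i^0)\in\mathbb R^d\times\mathbb R^d. \] *)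

theory Defs
  imports "HOL-Analysis.Analysis"
begin

definition Gvc :: "(real \<Rightarrow> real) \<Rightarrow> 'a::real_normed_vector \<Rightarrow> 'a" where
  "Gvc g p = (if p = 0 then 0 else (g (norm p) / norm p) *\<^sub>R p)"

definition psi_sing :: "real \<Rightarrow> real \<Rightarrow> real" where
  "psi_sing \<alpha> r = r powr (- \<alpha>)"

text \<open>Global (classical) solution on [0,\<infinity>) of the Cucker-Smale model with velocity
  control, agents indexed by {1..N}. Since psi is singular at 0, a global solution
  is non-collisional for all t \<ge> 0 (otherwise the right-hand side is undefined).\<close>
definition cs_global_solution ::
  "nat \<Rightarrow> real \<Rightarrow> (real \<Rightarrow> real) \<Rightarrow> (real \<Rightarrow> real) \<Rightarrow>
   (nat \<Rightarrow> real \<Rightarrow> 'a::real_normed_vector) \<Rightarrow> (nat \<Rightarrow> real \<Rightarrow> 'a) \<Rightarrow> bool" where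
  "cs_global_solution N \<kappa> g \<psi> q p \<longleftrightarrow>
     (\<forall>i\<in>{1..N}. continuous_on {0..} (q i) \<and> continuous_on {0..} (p i)) \<and>
     (\<forall>t\<ge>0. \<forall>i\<in>{1..N}. \<forall>j\<in>{1..N}. i \<noteq> j \<longrightarrow> q i t \<noteq> q j t) \<and>
     (\<forall>t>0. \<forall>i\<in>{1..N}.
        (q i has_vector_derivative Gvc g (p i t)) (at t) \<and>
        (p i has_vector_derivative
           (\<kappa> / real N) *\<^sub>R (\<Sum>k\<in>{1..N}. \<psi> (norm (q k t - q i t)) *\<^sub>R (Gvc g (p k t) - Gvc g (p i t))))
          (at t))"

end

theory Submission
  imports Defs
begin

lemma deriv_normsq:
  fixes f :: "real \<Rightarrow> 'a::real_inner"
  assumes "(f has_vector_derivative f') (at t)"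
  shows "((\<lambda>s. (norm (f s))\<^sup>2) has_real_derivative 2 * inner (f t) f') (at t)"
proof -
  have "((\<lambda>s. inner (f s) (f s)) has_derivative (\<lambda>h. inner (f t) (h *\<^sub>R f') + inner (h *\<^sub>R f') (f t))) (at t)"
    using assms unfolding has_vector_derivative_def by (intro derivative_eq_intros) auto
  then have "((\<lambda>s. inner (f s) (f s)) has_real_derivative 2 * inner (f t) f') (at t)"
    unfolding has_field_derivative_def
    by (rule has_derivative_eq_rhs) (auto simp: inner_commute algebra_simps fun_eq_iff)
  then show ?thesis by (simp add: power2_norm_eq_inner)
qed

lemma G_mono_lip:
  fixes x y :: "'a::real_inner"
  assumes g0: "g 0 = 0" and m: "m > 0"
    and gm: "\<And>a b. 0 \<le> a \<Longrightarrow> a \<le> b \<Longrightarrow> b \<le> R \<Longrightarrow> m * (b - a) \<le> g b - g a \<and> g b - g a \<le> M * (b - a)"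
    and x: "norm x \<le> R" and y: "norm y \<le> R"
  shows "m * (norm (x - y))\<^sup>2 \<le> inner (Gvc g x - Gvc g y) (x - y)"
    and "norm (Gvc g x - Gvc g y) \<le> M * norm (x - y)"
proof -
  have gm': "m * b \<le> g b \<and> g b \<le> M * b" if "0 \<le> b" "b \<le> R" for b
    using gm[of 0 b] that g0 by auto
  have mM: "m \<le> M" if "R > 0"
    using gm[of 0 R] that by (auto simp: g0) (metis mult_right_le_imp_le order_trans)
  have "m * (norm (x - y))\<^sup>2 \<le> inner (Gvc g x - Gvc g y) (x - y)
        \<and> norm (Gvc g x - Gvc g y) \<le> M * norm (x - y)"
  proof (cases "x = 0 \<or> y = 0")
    case True
    have one: "m * (norm z)\<^sup>2 \<le> inner (Gvc g z) z \<and> norm (Gvc g z) \<le> M * norm z" if "norm z \<le> R" for z :: 'a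
    proof (cases "z = 0")
      case True then show ?thesis by (simp add: Gvc_def)
    next
      case False
      let ?b = "norm z"
      have b: "?b > 0" using False by simp
      have "inner (Gvc g z) z = g ?b * ?b"
        using b by (simp add: Gvc_def False power2_norm_eq_inner[symmetric] power2_eq_square)
      moreover have "norm (Gvc g z) = \<bar>g ?b\<bar>"
        using b by (simp add: Gvc_def False)
      moreover have "m * ?b \<le> g ?b" "g ?b \<le> M * ?b" using gm'[of ?b] that by auto
      moreover have "0 \<le> g ?b" using \<open>m * ?b \<le> g ?b\<close> m b by (smt (verit) mult_pos_pos)
      ultimately show ?thesis using b m by (simp add: power2_eq_square)
    qed
    show ?thesis
    proof (cases "x = 0")
      case True
      then show ?thesis using one[OF y] by (simp add: Gvc_def inner_commute)
    next
      case False
      then have "y = 0" using True by simp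
      then show ?thesis using one[OF x] by (simp add: Gvc_def)
    qed
  next
    case False
    then have x0: "x \<noteq> 0" and y0: "y \<noteq> 0" by auto
    define a where "a = norm x"
    define b where "b = norm y"
    define s where "s = inner x y"
    have a: "a > 0" and b: "b > 0" using x0 y0 by (auto simp: a_def b_def)
    have s: "s \<le> a * b" unfolding s_def a_def b_def by (rule norm_cauchy_schwarz)
    have ga: "m * a \<le> g a" "g a \<le> M * a" using gm'[of a] x a by (auto simp: a_def)
    have gb: "m * b \<le> g b" "g b \<le> M * b" using gm'[of b] y b by (auto simp: b_def)
    define ha where "ha = g a / a"
    define hb where "hb = g b / b"
    have ha: "m \<le> ha" "ha \<le> M" using ga a by (auto simp: ha_def field_simps)
    have hb: "m \<le> hb" "hb \<le> M" using gb b by (auto simp: hb_def field_simps)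
    have Gx: "Gvc g x = ha *\<^sub>R x" by (simp add: Gvc_def x0 ha_def a_def)
    have Gy: "Gvc g y = hb *\<^sub>R y" by (simp add: Gvc_def y0 hb_def b_def)
    have xx: "inner x x = a\<^sup>2" by (simp add: a_def power2_norm_eq_inner)
    have yy: "inner y y = b\<^sup>2" by (simp add: b_def power2_norm_eq_inner)
    have nd: "(norm (x - y))\<^sup>2 = a\<^sup>2 + b\<^sup>2 - 2 * s"
      by (simp add: power2_norm_eq_inner inner_diff xx yy s_def inner_commute)
    have ip: "inner (Gvc g x - Gvc g y) (x - y) = ha * a\<^sup>2 + hb * b\<^sup>2 - (ha + hb) * s"
      by (simp add: Gx Gy inner_diff xx yy s_def inner_commute algebra_simps)
    have ng: "(norm (Gvc g x - Gvc g y))\<^sup>2 = ha\<^sup>2 * a\<^sup>2 + hb\<^sup>2 * b\<^sup>2 - 2 * ha * hb * s"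
      unfolding power2_norm_eq_inner
      by (simp add: Gx Gy inner_diff xx[unfolded power2_eq_square] yy[unfolded power2_eq_square] s_def inner_commute algebra_simps power2_eq_square)
    have hag: "ha * a = g a" "hb * b = g b" using a b by (auto simp: ha_def hb_def)
    have mono_ab: "(a - b) * ((g a - m * a) - (g b - m * b)) \<ge> 0"
    proof (cases "a \<le> b")
      case True
      then have "m * (b - a) \<le> g b - g a" using gm[of a b] a y by (auto simp: b_def)
      then show ?thesis using True by (intro mult_nonpos_nonpos) (auto simp: algebra_simps)
    next
      case False
      then have "m * (a - b) \<le> g a - g b" using gm[of b a] b x by (auto simp: a_def)
      then show ?thesis using False by (intro mult_nonneg_nonneg) (auto simp: algebra_simps)
    qed
    have lip_ab: "(g a - g b)\<^sup>2 \<le> (M * (a - b))\<^sup>2"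
    proof (cases "a \<le> b")
      case True
      then have "m * (b - a) \<le> g b - g a \<and> g b - g a \<le> M * (b - a)" using gm[of a b] a y by (auto simp: b_def)
      moreover have "0 \<le> m * (b - a)" using True m by simp
      ultimately have "\<bar>g a - g b\<bar> \<le> \<bar>M * (a - b)\<bar>" by (auto simp: algebra_simps)
      then show ?thesis by (metis abs_ge_zero power2_abs power_mono)
    next
      case False
      then have "m * (a - b) \<le> g a - g b \<and> g a - g b \<le> M * (a - b)" using gm[of b a] b x by (auto simp: a_def)
      moreover have "0 \<le> m * (a - b)" using False m by simp
      ultimately have "\<bar>g a - g b\<bar> \<le> \<bar>M * (a - b)\<bar>" by (auto simp: algebra_simps)
      then show ?thesis by (metis abs_ge_zero power2_abs power_mono)
    qed
    have hag': "g a = ha * a" "g b = hb * b" using hag by auto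
    have part1: "m * (norm (x - y))\<^sup>2 \<le> inner (Gvc g x - Gvc g y) (x - y)"
    proof -
      have c0: "ha + hb - 2 * m \<ge> 0" using ha hb by simp
      have i1: "(ha + hb - 2 * m) * s \<le> (ha + hb - 2 * m) * (a * b)"
        using c0 s by (simp add: mult_left_mono)
      have i2: "inner (Gvc g x - Gvc g y) (x - y) - m * (norm (x - y))\<^sup>2
          = (ha - m) * a * a + (hb - m) * b * b - (ha + hb - 2 * m) * s"
        unfolding ip nd by (simp add: algebra_simps power2_eq_square)
      have i3: "(ha - m) * a * a + (hb - m) * b * b - (ha + hb - 2 * m) * (a * b)
           = (a - b) * ((g a - m * a) - (g b - m * b))"
        unfolding hag' by (simp add: algebra_simps)
      show ?thesis using i1 i2 i3 mono_ab by linarith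
    qed
    have part2: "norm (Gvc g x - Gvc g y) \<le> M * norm (x - y)"
    proof -
      have M0: "M \<ge> 0" using ha m by simp
      have hb0: "0 \<le> hb" using hb m by linarith
      have "ha * hb \<le> M * M"
        by (rule mult_mono) (use ha hb hb0 M0 in linarith)+
      then have c0: "M\<^sup>2 - ha * hb \<ge> 0" by (simp add: power2_eq_square)
      have i1: "(M\<^sup>2 - ha * hb) * s \<le> (M\<^sup>2 - ha * hb) * (a * b)"
        using c0 s by (simp add: mult_left_mono)
      have e1: "(M * norm (x - y))\<^sup>2 = M\<^sup>2 * (a\<^sup>2 + b\<^sup>2 - 2 * s)"
        by (simp only: power_mult_distrib nd)
      have i2: "(M * norm (x - y))\<^sup>2 - (norm (Gvc g x - Gvc g y))\<^sup>2
          = M\<^sup>2 * a\<^sup>2 - ha\<^sup>2 * a\<^sup>2 + M\<^sup>2 * b\<^sup>2 - hb\<^sup>2 * b\<^sup>2 - 2 * (M\<^sup>2 - ha * hb) * s"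
        unfolding e1 ng by algebra
      have i3: "M\<^sup>2 * a\<^sup>2 - ha\<^sup>2 * a\<^sup>2 + M\<^sup>2 * b\<^sup>2 - hb\<^sup>2 * b\<^sup>2 - 2 * (M\<^sup>2 - ha * hb) * (a * b)
          = (M * (a - b))\<^sup>2 - (ha * a - hb * b)\<^sup>2"
        by algebra
      have "(norm (Gvc g x - Gvc g y))\<^sup>2 \<le> (M * norm (x - y))\<^sup>2"
        using i1 i2 i3 lip_ab unfolding hag' by linarith
      then show ?thesis by (rule power2_le_imp_le) (simp add: M0)
    qed
    show ?thesis using part1 part2 by simp
  qed
  then show "m * (norm (x - y))\<^sup>2 \<le> inner (Gvc g x - Gvc g y) (x - y)"
    and "norm (Gvc g x - Gvc g y) \<le> M * norm (x - y)" by auto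
qed

lemma antisym_double_sum:
  fixes f :: "nat \<Rightarrow> nat \<Rightarrow> 'b::real_vector"
  assumes "\<And>i k. i \<in> A \<Longrightarrow> k \<in> A \<Longrightarrow> f k i = - f i k"
  shows "(\<Sum>i\<in>A. \<Sum>k\<in>A. f i k) = 0"
proof -
  define S where "S = (\<Sum>i\<in>A. \<Sum>k\<in>A. f i k)"
  have "S = (\<Sum>k\<in>A. \<Sum>i\<in>A. f i k)" unfolding S_def by (rule sum.swap)
  also have "\<dots> = (\<Sum>k\<in>A. \<Sum>i\<in>A. - f k i)"
    by (intro sum.cong refl) (rule assms; assumption)
  also have "\<dots> = - S" unfolding S_def by (simp only: sum_negf)
  finally have eq: "S = - S" .
  have "S + S = - S + S" using eq by (rule arg_cong)
  then have "2 *\<^sub>R S = 0" by (simp only: scaleR_2 left_minus)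
  then show ?thesis unfolding S_def by simp
qed

lemma mvt_bound:
  fixes f :: "real \<Rightarrow> 'a::real_normed_vector"
  assumes "a \<le> b"
    and f': "\<And>x. a \<le> x \<Longrightarrow> x \<le> b \<Longrightarrow> (f has_vector_derivative f' x) (at x)"
    and \<phi>': "\<And>x. a \<le> x \<Longrightarrow> x \<le> b \<Longrightarrow> (\<phi> has_real_derivative \<phi>' x) (at x)"
    and bnd: "\<And>x. a \<le> x \<Longrightarrow> x \<le> b \<Longrightarrow> norm (f' x) \<le> \<phi>' x"
  shows "norm (f b - f a) \<le> \<phi> b - \<phi> a"
proof (cases "a = b")
  case True then show ?thesis by simp
next
  case False
  then have ab: "a < b" using assms by simp
  show ?thesis
  proof (rule differentiable_bound_general[OF ab, where f' = f' and \<phi>' = \<phi>'])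
    show "continuous_on {a..b} f"
      using f' by (intro continuous_at_imp_continuous_on ballI has_vector_derivative_continuous) auto
    show "continuous_on {a..b} \<phi>"
      using \<phi>' by (intro continuous_at_imp_continuous_on ballI DERIV_isCont) auto
    show "(f has_vector_derivative f' x) (at x)" if "a < x" "x < b" for x using f' that by simp
    show "(\<phi> has_vector_derivative \<phi>' x) (at x)" if "a < x" "x < b" for x
      using \<phi>' that by (simp add: has_real_derivative_iff_has_vector_derivative)
    show "norm (f' x) \<le> \<phi>' x" if "a < x" "x < b" for x using bnd that by simp
  qed
qed

lemma finite_eventually_lower:
  fixes f :: "'i \<Rightarrow> real \<Rightarrow> real"
  assumes "finite I" "\<forall>x\<in>I. \<exists>\<delta>>0. eventually (\<lambda>t. \<delta> \<le> f x t) at_top"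
  shows "\<exists>\<delta>>0. eventually (\<lambda>t. \<forall>x\<in>I. \<delta> \<le> f x t) at_top"
  using assms
proof (induction I rule: finite_induct)
  case empty then show ?case by (auto intro: exI[of _ 1])
next
  case (insert y I)
  then obtain \<delta>1 where d1: "\<delta>1 > 0" "eventually (\<lambda>t. \<forall>x\<in>I. \<delta>1 \<le> f x t) at_top" by auto
  from insert obtain \<delta>2 where d2: "\<delta>2 > 0" "eventually (\<lambda>t. \<delta>2 \<le> f y t) at_top" by auto
  have "eventually (\<lambda>t. \<forall>x\<in>insert y I. min \<delta>1 \<delta>2 \<le> f x t) at_top"
    using eventually_conj[OF d1(2) d2(2)] by eventually_elim auto
  then show ?case using d1 d2 by (intro exI[of _ "min \<delta>1 \<delta>2"]) auto
qed

lemma finite_uniform_lower: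
  fixes f :: "'i \<Rightarrow> real \<Rightarrow> real"
  assumes "finite I" "\<forall>x\<in>I. \<exists>c>0. \<forall>t\<ge>0. c \<le> f x t"
  shows "\<exists>c>0. \<forall>x\<in>I. \<forall>t\<ge>0. c \<le> f x t"
  using assms
proof (induction I rule: finite_induct)
  case empty then show ?case by (auto intro: exI[of _ 1])
next
  case (insert y I)
  then obtain c1 where c1: "c1 > 0" "\<forall>x\<in>I. \<forall>t\<ge>0. c1 \<le> f x t" by auto
  from insert obtain c2 where c2: "c2 > 0" "\<forall>t\<ge>0. c2 \<le> f y t" by auto
  have "\<forall>x\<in>insert y I. \<forall>t\<ge>0. min c1 c2 \<le> f x t"
    using c1(2) c2(2) by (auto intro: order_trans[OF min.cobounded1] order_trans[OF min.cobounded2])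
  then show ?case using c1 c2 by (intro exI[of _ "min c1 c2"]) auto
qed

lemma internal_identity:
  fixes P U :: "nat \<Rightarrow> 'a::real_inner" and w :: "nat \<Rightarrow> nat \<Rightarrow> real"
  assumes fin: "finite C" and sym: "\<And>i k. i \<in> C \<Longrightarrow> k \<in> C \<Longrightarrow> w k i = w i k"
  shows "(\<Sum>i\<in>C. \<Sum>j\<in>C. inner (P i - P j) (\<Sum>k\<in>C. w i k *\<^sub>R (U k - U i)))
       = - (real (card C) / 2) * (\<Sum>i\<in>C. \<Sum>k\<in>C. w i k * inner (P i - P k) (U i - U k))"
proof -
  define A where "A = (\<Sum>i\<in>C. \<Sum>k\<in>C. w i k * inner (P i) (U k - U i))"
  define Z where "Z = (\<Sum>i\<in>C. \<Sum>k\<in>C. w i k *\<^sub>R (U k - U i))"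
  have Z0: "Z = 0" unfolding Z_def
    by (rule antisym_double_sum) (auto simp: sym algebra_simps)
  have "(\<Sum>i\<in>C. \<Sum>j\<in>C. inner (P i - P j) (\<Sum>k\<in>C. w i k *\<^sub>R (U k - U i)))
      = (\<Sum>i\<in>C. \<Sum>j\<in>C. inner (P i) (\<Sum>k\<in>C. w i k *\<^sub>R (U k - U i)))
        - (\<Sum>i\<in>C. \<Sum>j\<in>C. inner (P j) (\<Sum>k\<in>C. w i k *\<^sub>R (U k - U i)))"
    by (simp add: inner_diff_left sum_subtractf)
  also have "(\<Sum>i\<in>C. \<Sum>j\<in>C. inner (P i) (\<Sum>k\<in>C. w i k *\<^sub>R (U k - U i))) = real (card C) * A"
    unfolding A_def by (simp add: inner_sum_right sum_distrib_left)
  also have "(\<Sum>i\<in>C. \<Sum>j\<in>C. inner (P j) (\<Sum>k\<in>C. w i k *\<^sub>R (U k - U i)))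
       = (\<Sum>j\<in>C. inner (P j) Z)"
    unfolding Z_def by (subst sum.swap) (simp add: inner_sum_right)
  also have "\<dots> = 0" by (simp add: Z0)
  finally have L: "(\<Sum>i\<in>C. \<Sum>j\<in>C. inner (P i - P j) (\<Sum>k\<in>C. w i k *\<^sub>R (U k - U i))) = real (card C) * A"
    by simp
  have "A = (\<Sum>i\<in>C. \<Sum>k\<in>C. w i k * inner (P k) (U i - U k))"
    unfolding A_def by (subst sum.swap) (auto intro!: sum.cong simp: sym)
  then have "2 * A = (\<Sum>i\<in>C. \<Sum>k\<in>C. w i k * inner (P i) (U k - U i))
                   + (\<Sum>i\<in>C. \<Sum>k\<in>C. w i k * inner (P k) (U i - U k))"
    by (simp add: A_def)
  also have "\<dots> = - (\<Sum>i\<in>C. \<Sum>k\<in>C. w i k * inner (P i - P k) (U i - U k))"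
    by (simp add: sum.distrib[symmetric] sum_negf[symmetric] inner_diff algebra_simps)
  finally have "A = - (1/2) * (\<Sum>i\<in>C. \<Sum>k\<in>C. w i k * inner (P i - P k) (U i - U k))"
    by simp
  then show ?thesis using L by simp
qed

lemma exp_decay:
  fixes X X' :: "real \<Rightarrow> real"
  assumes "a \<le> t"
    and d: "\<And>s. a \<le> s \<Longrightarrow> (X has_real_derivative X' s) (at s)"
    and le: "\<And>s. a \<le> s \<Longrightarrow> X' s \<le> - c * X s"
  shows "X t \<le> X a * exp (- c * (t - a))"
proof -
  have "(\<lambda>s. X s * exp (c * s)) a \<ge> (\<lambda>s. X s * exp (c * s)) t"
  proof (rule DERIV_nonpos_imp_nonincreasing[OF assms(1)])
    fix s assume s: "a \<le> s" "s \<le> t"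
    have "((\<lambda>s. X s * exp (c * s)) has_real_derivative X' s * exp (c * s) + X s * (exp (c * s) * c)) (at s)"
      using d[OF s(1)] by (auto intro!: derivative_eq_intros)
    moreover have "X' s * exp (c * s) + X s * (exp (c * s) * c) \<le> 0"
    proof -
      have "X' s * exp (c * s) \<le> (- c * X s) * exp (c * s)"
        using le[OF s(1)] by (intro mult_right_mono) auto
      then show ?thesis by (simp add: algebra_simps)
    qed
    ultimately show "\<exists>y. ((\<lambda>s. X s * exp (c * s)) has_real_derivative y) (at s) \<and> y \<le> 0" by blast
  qed
  then have "X t * exp (c * t) \<le> X a * exp (c * a)" by simp
  then have "X t * exp (c * t) * exp (- c * t) \<le> X a * exp (c * a) * exp (- c * t)"
    by (intro mult_right_mono) auto
  then show ?thesis by (simp add: exp_add[symmetric] algebra_simps mult_exp_exp)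
qed

locale csm =
  fixes N :: nat and \<kappa> \<alpha> :: real and g :: "real \<Rightarrow> real"
    and q p :: "nat \<Rightarrow> real \<Rightarrow> 'a::euclidean_space"
  assumes N: "N \<ge> 1" and kappa: "\<kappa> > 0" and alpha: "\<alpha> > 1"
    and g0: "g 0 = 0"
    and gm: "\<And>R. R \<ge> 0 \<Longrightarrow> \<exists>m M. 0 < m \<and> (\<forall>a b. 0 \<le> a \<longrightarrow> a \<le> b \<longrightarrow> b \<le> R \<longrightarrow>
                 m * (b - a) \<le> g b - g a \<and> g b - g a \<le> M * (b - a))"
    and sol: "cs_global_solution N \<kappa> g (psi_sing \<alpha>) q p"
    and flock_q: "\<exists>D. \<forall>t\<ge>0. \<forall>i\<in>{1..N}. \<forall>j\<in>{1..N}. norm (q i t - q j t) \<le> D"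
    and flock_p: "((\<lambda>t. Max {norm (p i t - p j t) | i j. i \<in> {1..N} \<and> j \<in> {1..N}}) \<longlongrightarrow> 0) at_top"
begin

definition "u i t = Gvc g (p i t)"
definition "Fp i t = (\<kappa> / real N) *\<^sub>R (\<Sum>k\<in>{1..N}. psi_sing \<alpha> (norm (q k t - q i t)) *\<^sub>R (u k t - u i t))"
definition "XC C = (\<lambda>t. \<Sum>i\<in>C. \<Sum>j\<in>C. (norm (p i t - p j t))\<^sup>2)"
definition "Ext C i t = (\<kappa> / real N) *\<^sub>R (\<Sum>k\<in>{1..N} - C. psi_sing \<alpha> (norm (q k t - q i t)) *\<^sub>R (u k t - u i t))"

lemma qd: "t > 0 \<Longrightarrow> i \<in> {1..N} \<Longrightarrow> (q i has_vector_derivative u i t) (at t)"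
  using sol unfolding cs_global_solution_def u_def by blast
lemma pd: "t > 0 \<Longrightarrow> i \<in> {1..N} \<Longrightarrow> (p i has_vector_derivative Fp i t) (at t)"
  using sol unfolding cs_global_solution_def u_def Fp_def by blast
lemma qcont: "i \<in> {1..N} \<Longrightarrow> continuous_on {0..} (q i)"
  using sol unfolding cs_global_solution_def by blast
lemma pcont: "i \<in> {1..N} \<Longrightarrow> continuous_on {0..} (p i)"
  using sol unfolding cs_global_solution_def by blast
lemma noncoll: "t \<ge> 0 \<Longrightarrow> i \<in> {1..N} \<Longrightarrow> j \<in> {1..N} \<Longrightarrow> i \<noteq> j \<Longrightarrow> q i t \<noteq> q j t"
  using sol unfolding cs_global_solution_def by blast

lemma sum_Fp: "(\<Sum>i\<in>{1..N}. Fp i t) = 0"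
proof -
  have "(\<Sum>i\<in>{1..N}. \<Sum>k\<in>{1..N}. psi_sing \<alpha> (norm (q k t - q i t)) *\<^sub>R (u k t - u i t)) = 0"
    by (rule antisym_double_sum) (simp add: norm_minus_commute algebra_simps)
  then show ?thesis unfolding Fp_def by (simp add: scaleR_sum_right[symmetric])
qed

lemma sum_p_const:
  assumes "0 < s" "s \<le> t"
  shows "(\<Sum>i\<in>{1..N}. p i t) = (\<Sum>i\<in>{1..N}. p i s)"
proof -
  have "norm ((\<Sum>i\<in>{1..N}. p i t) - (\<Sum>i\<in>{1..N}. p i s)) \<le> (\<lambda>x. 0) t - (\<lambda>x. 0) s"
  proof (rule mvt_bound[OF assms(2), where f' = "\<lambda>x. \<Sum>i\<in>{1..N}. Fp i x" and \<phi>' = "\<lambda>x. 0"])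
    fix x assume "s \<le> x" "x \<le> t"
    then show "((\<lambda>x. \<Sum>i\<in>{1..N}. p i x) has_vector_derivative (\<Sum>i\<in>{1..N}. Fp i x)) (at x)"
      using assms by (intro has_vector_derivative_sum pd) auto
  qed (use sum_Fp in simp_all)
  then show ?thesis by simp
qed

lemma p_bounded: "\<exists>R\<ge>0. \<forall>i\<in>{1..N}. \<forall>t\<ge>0. norm (p i t) \<le> R"
proof -
  define Mx where "Mx t = Max {norm (p i t - p j t) | i j. i \<in> {1..N} \<and> j \<in> {1..N}}" for t
  have fin: "finite {norm (p i t - p j t) | i j. i \<in> {1..N} \<and> j \<in> {1..N}}" for t
  proof -
    have "{norm (p i t - p j t) | i j. i \<in> {1..N} \<and> j \<in> {1..N}}
          = (\<lambda>(i,j). norm (p i t - p j t)) ` ({1..N} \<times> {1..N})" by force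
    then show ?thesis by simp
  qed
  have le_Mx: "norm (p i t - p j t) \<le> Mx t" if "i \<in> {1..N}" "j \<in> {1..N}" for i j t
    unfolding Mx_def by (rule Max_ge[OF fin]) (use that in blast)
  have "eventually (\<lambda>t. Mx t < 1) at_top"
    using flock_p unfolding Mx_def[symmetric] by (rule order_tendstoD) simp
  then obtain T0 where T0: "\<And>t. t \<ge> T0 \<Longrightarrow> Mx t < 1" by (auto simp: eventually_at_top_linorder)
  define T where "T = max T0 1"
  have "\<exists>B. \<forall>i\<in>{1..N}. \<forall>t\<in>{0..T}. norm (p i t) \<le> B"
  proof -
    have "\<exists>B. \<forall>t\<in>{0..T}. norm (p i t) \<le> B" if i: "i \<in> {1..N}" for i
    proof -
      have "compact (p i ` {0..T})"
        by (rule compact_continuous_image) (use pcont[OF i] in \<open>auto intro: continuous_on_subset\<close>)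
      then obtain B where "\<forall>x\<in>p i ` {0..T}. norm x \<le> B"
        using compact_imp_bounded bounded_iff by metis
      then show ?thesis by auto
    qed
    then obtain B where B: "\<And>i. i \<in> {1..N} \<Longrightarrow> \<forall>t\<in>{0..T}. norm (p i t) \<le> B i" by metis
    have "norm (p i t) \<le> Max (B ` {1..N})" if "i \<in> {1..N}" "t \<in> {0..T}" for i t
      using B[OF that(1)] that by (meson Max_ge finite_atLeastAtMost finite_imageI imageI order_trans)
    then show ?thesis by blast
  qed
  then obtain B1 where B1: "\<And>i t. i \<in> {1..N} \<Longrightarrow> 0 \<le> t \<Longrightarrow> t \<le> T \<Longrightarrow> norm (p i t) \<le> B1" by (meson atLeastAtMost_iff)
  define P0 where "P0 = (\<Sum>i\<in>{1..N}. p i 1)"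
  have large: "norm (p i t) \<le> norm P0 / real N + 1" if i: "i \<in> {1..N}" and t: "t \<ge> T" for i t
  proof -
    have Nr: "real N > 0" using N by simp
    have sumt: "(\<Sum>j\<in>{1..N}. p j t) = P0" unfolding P0_def
      using t by (intro sum_p_const) (auto simp: T_def)
    have "real N *\<^sub>R p i t = (\<Sum>j\<in>{1..N}. p i t)" by (simp add: sum_constant_scaleR)
    also have "\<dots> = (\<Sum>j\<in>{1..N}. p j t) + (\<Sum>j\<in>{1..N}. (p i t - p j t))"
      by (simp add: sum_subtractf)
    finally have eq: "real N *\<^sub>R p i t = P0 + (\<Sum>j\<in>{1..N}. (p i t - p j t))" using sumt by simp
    have Mt: "Mx t < 1" using T0 t by (simp add: T_def)
    have "norm (\<Sum>j\<in>{1..N}. (p i t - p j t)) \<le> (\<Sum>j\<in>{1..N}. norm (p i t - p j t))"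
      by (rule norm_sum)
    also have "\<dots> \<le> (\<Sum>j\<in>{1..N}. 1)"
    proof (intro sum_mono)
      fix j assume "j \<in> {1..N}"
      then have "norm (p i t - p j t) \<le> Mx t" by (rule le_Mx[OF i])
      with Mt show "norm (p i t - p j t) \<le> 1" by linarith
    qed
    also have "\<dots> = real N" by simp
    finally have S: "norm (\<Sum>j\<in>{1..N}. (p i t - p j t)) \<le> real N" .
    have "norm (real N *\<^sub>R p i t) \<le> norm P0 + norm (\<Sum>j\<in>{1..N}. (p i t - p j t))"
      unfolding eq by (rule norm_triangle_ineq)
    with S have "norm (real N *\<^sub>R p i t) \<le> norm P0 + real N" by linarith
    then have "real N * norm (p i t) \<le> norm P0 + real N" by simp
    then show ?thesis using Nr by (simp add: field_simps)
  qed
  define R where "R = max (max B1 0) (norm P0 / real N + 1)"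
  have "norm (p i t) \<le> R" if "i \<in> {1..N}" "t \<ge> 0" for i t
  proof (cases "t \<le> T")
    case True then show ?thesis using B1[OF that(1) that(2) True] unfolding R_def by linarith
  next
    case False
    then have "norm (p i t) \<le> norm P0 / real N + 1" using large[OF that(1), of t] by simp
    then show ?thesis unfolding R_def by linarith
  qed
  moreover have "R \<ge> 0" unfolding R_def by simp
  ultimately show ?thesis by blast
qed

definition "Rb = (SOME R. R \<ge> 0 \<and> (\<forall>i\<in>{1..N}. \<forall>t\<ge>0. norm (p i t) \<le> R))"

lemma Rb: "Rb \<ge> 0" "\<And>i t. i \<in> {1..N} \<Longrightarrow> t \<ge> 0 \<Longrightarrow> norm (p i t) \<le> Rb"
proof -
  have "Rb \<ge> 0 \<and> (\<forall>i\<in>{1..N}. \<forall>t\<ge>0. norm (p i t) \<le> Rb)"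
    unfolding Rb_def by (rule someI_ex) (use p_bounded in blast)
  then show "Rb \<ge> 0" "\<And>i t. i \<in> {1..N} \<Longrightarrow> t \<ge> 0 \<Longrightarrow> norm (p i t) \<le> Rb" by auto
qed

definition "Pmm mM \<longleftrightarrow> 0 < fst mM \<and> (\<forall>a b. 0 \<le> a \<longrightarrow> a \<le> b \<longrightarrow> b \<le> Rb + 1 \<longrightarrow>
                 fst mM * (b - a) \<le> g b - g a \<and> g b - g a \<le> snd mM * (b - a))"
definition "mMp = (SOME mM. Pmm mM)"
definition "mm = fst mMp"
definition "MM = snd mMp"

lemma Pmm: "Pmm mMp"
proof -
  have "Rb + 1 \<ge> 0" using Rb(1) by simp
  from gm[OF this] obtain m M where "0 < m \<and> (\<forall>a b. 0 \<le> a \<longrightarrow> a \<le> b \<longrightarrow> b \<le> Rb + 1 \<longrightarrow>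
                 m * (b - a) \<le> g b - g a \<and> g b - g a \<le> M * (b - a))" by blast
  then have "Pmm (m, M)" unfolding Pmm_def by simp
  then show ?thesis unfolding mMp_def by (rule someI)
qed

lemma mM: "mm > 0" "\<And>a b. 0 \<le> a \<Longrightarrow> a \<le> b \<Longrightarrow> b \<le> Rb + 1 \<Longrightarrow>
                 mm * (b - a) \<le> g b - g a \<and> g b - g a \<le> MM * (b - a)"
  using Pmm unfolding Pmm_def mm_def[symmetric] MM_def[symmetric] by blast+

lemma mm_le_MM: "mm \<le> MM"
proof -
  have "mm * (Rb + 1 - 0) \<le> g (Rb + 1) - g 0 \<and> g (Rb + 1) - g 0 \<le> MM * (Rb + 1 - 0)"
    using Rb(1) by (intro mM(2)) auto
  then have "mm * (Rb + 1) \<le> MM * (Rb + 1)" by simp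
  then show ?thesis using Rb(1) by (simp add: mult_le_cancel_right)
qed

lemma MM_pos: "MM > 0" using mm_le_MM mM(1) by linarith

lemma u_mono: "i \<in> {1..N} \<Longrightarrow> k \<in> {1..N} \<Longrightarrow> t \<ge> 0 \<Longrightarrow>
    mm * (norm (p i t - p k t))\<^sup>2 \<le> inner (p i t - p k t) (u i t - u k t)"
  unfolding u_def inner_commute[of "p i t - p k t"]
  by (rule G_mono_lip(1)[OF g0 mM(1) mM(2)]) (use Rb in \<open>force+\<close>)

lemma u_lip: "i \<in> {1..N} \<Longrightarrow> k \<in> {1..N} \<Longrightarrow> t \<ge> 0 \<Longrightarrow>
    norm (u i t - u k t) \<le> MM * norm (p i t - p k t)"
  unfolding u_def
  by (rule G_mono_lip(2)[OF g0 mM(1) mM(2)]) (use Rb in \<open>force+\<close>)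

lemma XC_deriv:
  assumes "C \<subseteq> {1..N}" "t > 0"
  shows "(XC C has_real_derivative (\<Sum>i\<in>C. \<Sum>j\<in>C. 2 * inner (p i t - p j t) (Fp i t - Fp j t))) (at t)"
  unfolding XC_def
  by (intro DERIV_sum deriv_normsq has_vector_derivative_diff pd) (use assms in auto)

lemma XC_nonneg: "XC C t \<ge> 0" unfolding XC_def by (intro sum_nonneg) auto

lemma norm_le_sqrt_XC:
  assumes "finite C" "i \<in> C" "j \<in> C"
  shows "norm (p i t - p j t) \<le> sqrt (XC C t)"
proof -
  have "(norm (p i t - p j t))\<^sup>2 \<le> (\<Sum>j\<in>C. (norm (p i t - p j t))\<^sup>2)"
    by (rule member_le_sum) (use assms in auto)
  also have "\<dots> \<le> XC C t" unfolding XC_def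
    by (rule member_le_sum[where f = "\<lambda>i. \<Sum>j\<in>C. (norm (p i t - p j t))\<^sup>2"]) (use assms in \<open>auto intro: sum_nonneg\<close>)
  finally show ?thesis by (rule real_le_rsqrt)
qed

lemma XC_ineq:
  assumes C: "C \<subseteq> {1..N}" and t: "t > 0" and w: "w \<ge> 0"
    and wle: "\<And>i k. i \<in> C \<Longrightarrow> k \<in> C \<Longrightarrow> i \<noteq> k \<Longrightarrow> w \<le> psi_sing \<alpha> (norm (q k t - q i t))"
    and e: "\<And>i. i \<in> C \<Longrightarrow> norm (Ext C i t) \<le> e"
  shows "(\<Sum>i\<in>C. \<Sum>j\<in>C. 2 * inner (p i t - p j t) (Fp i t - Fp j t))
     \<le> - (2 * \<kappa> * real (card C) * mm / real N) * w * XC C t + 4 * (real (card C))\<^sup>2 * e * sqrt (XC C t)"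
proof -
  have fin: "finite C" using C finite_subset by blast
  define D where "D i j = p i t - p j t" for i j
  define ps where "ps i k = psi_sing \<alpha> (norm (q k t - q i t))" for i k
  define In where "In i = (\<Sum>k\<in>C. ps i k *\<^sub>R (u k t - u i t))" for i
  have ps_sym: "ps k i = ps i k" for i k unfolding ps_def by (simp add: norm_minus_commute)
  have s1: "(\<Sum>i\<in>C. \<Sum>j\<in>C. 2 * inner (D i j) (Fp i t - Fp j t)) = 4 * (\<Sum>i\<in>C. \<Sum>j\<in>C. inner (D i j) (Fp i t))"
  proof -
    have "(\<Sum>i\<in>C. \<Sum>j\<in>C. inner (D i j) (Fp j t)) = (\<Sum>j\<in>C. \<Sum>i\<in>C. inner (D i j) (Fp j t))"
      by (rule sum.swap)
    also have "\<dots> = - (\<Sum>j\<in>C. \<Sum>i\<in>C. inner (D j i) (Fp j t))"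
      by (simp add: D_def sum_negf[symmetric] inner_diff_left)
    finally have "(\<Sum>i\<in>C. \<Sum>j\<in>C. inner (D i j) (Fp j t)) = - (\<Sum>i\<in>C. \<Sum>j\<in>C. inner (D i j) (Fp i t))" .
    then show ?thesis
      by (simp add: inner_diff_right sum_subtractf sum_distrib_left[symmetric])
  qed
  have Fsplit: "Fp i t = (\<kappa> / real N) *\<^sub>R In i + Ext C i t" for i
  proof -
    have "(\<Sum>k\<in>{1..N}. ps i k *\<^sub>R (u k t - u i t)) = (\<Sum>k\<in>{1..N} - C. ps i k *\<^sub>R (u k t - u i t)) + In i"
      unfolding In_def by (rule sum.subset_diff[OF C]) simp
    then show ?thesis unfolding Fp_def Ext_def ps_def[symmetric] by (simp add: scaleR_add_right)
  qed
  have s2: "(\<Sum>i\<in>C. \<Sum>j\<in>C. inner (D i j) (Fp i t))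
      = (\<kappa> / real N) * (\<Sum>i\<in>C. \<Sum>j\<in>C. inner (D i j) (In i)) + (\<Sum>i\<in>C. \<Sum>j\<in>C. inner (D i j) (Ext C i t))"
    unfolding Fsplit by (simp add: inner_add_right sum.distrib sum_distrib_left)
  have s3: "(\<Sum>i\<in>C. \<Sum>j\<in>C. inner (D i j) (In i))
      = - (real (card C) / 2) * (\<Sum>i\<in>C. \<Sum>k\<in>C. ps i k * inner (D i k) (u i t - u k t))"
    unfolding D_def In_def
    by (rule internal_identity[OF fin, where w = ps and P = "\<lambda>i. p i t" and U = "\<lambda>i. u i t"]) (simp add: ps_sym)
  have s4: "w * mm * XC C t \<le> (\<Sum>i\<in>C. \<Sum>k\<in>C. ps i k * inner (D i k) (u i t - u k t))"
  proof -
    have "w * mm * XC C t = (\<Sum>i\<in>C. \<Sum>k\<in>C. w * (mm * (norm (D i k))\<^sup>2))"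
      unfolding XC_def D_def by (simp add: sum_distrib_left mult.assoc)
    also have "\<dots> \<le> (\<Sum>i\<in>C. \<Sum>k\<in>C. ps i k * inner (D i k) (u i t - u k t))"
    proof (intro sum_mono)
      fix i k assume ik: "i \<in> C" "k \<in> C"
      show "w * (mm * (norm (D i k))\<^sup>2) \<le> ps i k * inner (D i k) (u i t - u k t)"
      proof (cases "i = k")
        case True then show ?thesis by (simp add: D_def)
      next
        case False
        have mon: "mm * (norm (D i k))\<^sup>2 \<le> inner (D i k) (u i t - u k t)"
          unfolding D_def by (rule u_mono) (use ik C t in auto)
        have "0 \<le> mm * (norm (D i k))\<^sup>2" using mM(1) by simp
        then show ?thesis using wle[OF ik False] mon w unfolding ps_def
          by (meson mult_mono order_trans)
      qed
    qed
    finally show ?thesis .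
  qed
  have s5: "(\<Sum>i\<in>C. \<Sum>j\<in>C. inner (D i j) (Ext C i t)) \<le> (real (card C))\<^sup>2 * e * sqrt (XC C t)"
  proof -
    have "(\<Sum>i\<in>C. \<Sum>j\<in>C. inner (D i j) (Ext C i t)) \<le> (\<Sum>i\<in>C. \<Sum>j\<in>C. sqrt (XC C t) * e)"
    proof (intro sum_mono)
      fix i j assume ij: "i \<in> C" "j \<in> C"
      have "inner (D i j) (Ext C i t) \<le> norm (D i j) * norm (Ext C i t)"
        by (rule norm_cauchy_schwarz)
      also have "\<dots> \<le> sqrt (XC C t) * e"
        unfolding D_def
        by (intro mult_mono norm_le_sqrt_XC fin ij e) (auto simp: XC_nonneg)
      finally show "inner (D i j) (Ext C i t) \<le> sqrt (XC C t) * e" .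
    qed
    also have "\<dots> = (real (card C))\<^sup>2 * e * sqrt (XC C t)"
      by (simp add: power2_eq_square)
    finally show ?thesis .
  qed
  have kN: "\<kappa> / real N * (real (card C) / 2) \<ge> 0" using kappa by simp
  have "(\<kappa> / real N) * (\<Sum>i\<in>C. \<Sum>j\<in>C. inner (D i j) (In i))
        \<le> - (\<kappa> / real N * (real (card C) / 2)) * (w * mm * XC C t)"
    unfolding s3 using mult_left_mono[OF s4 kN] by (simp add: algebra_simps)
  from add_mono[OF this s5] have "(\<Sum>i\<in>C. \<Sum>j\<in>C. 2 * inner (D i j) (Fp i t - Fp j t))
     \<le> 4 * (- (\<kappa> / real N * (real (card C) / 2)) * (w * mm * XC C t) + (real (card C))\<^sup>2 * e * sqrt (XC C t))"
    unfolding s1 s2 by (rule mult_left_mono) simp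
  also have "\<dots> = - (2 * \<kappa> * real (card C) * mm / real N) * w * XC C t + 4 * (real (card C))\<^sup>2 * e * sqrt (XC C t)"
    by (simp add: algebra_simps)
  finally show ?thesis unfolding D_def .
qed

end

context csm begin

definition "Dq = (SOME D. \<forall>t\<ge>0. \<forall>i\<in>{1..N}. \<forall>j\<in>{1..N}. norm (q i t - q j t) \<le> D)"
definition "D1 = max Dq 1"

lemma D1: "D1 \<ge> 1" "t \<ge> 0 \<Longrightarrow> i \<in> {1..N} \<Longrightarrow> j \<in> {1..N} \<Longrightarrow> norm (q i t - q j t) \<le> D1"
proof -
  have "\<forall>t\<ge>0. \<forall>i\<in>{1..N}. \<forall>j\<in>{1..N}. norm (q i t - q j t) \<le> Dq"
    unfolding Dq_def by (rule someI_ex) (rule flock_q)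
  then show "D1 \<ge> 1" "t \<ge> 0 \<Longrightarrow> i \<in> {1..N} \<Longrightarrow> j \<in> {1..N} \<Longrightarrow> norm (q i t - q j t) \<le> D1"
    unfolding D1_def by (auto intro: order_trans[OF _ max.cobounded1])
qed

definition "Xf = XC {1..N}"
definition "cdec = 2 * \<kappa> * mm * D1 powr (- \<alpha>)"

lemma cdec_pos: "cdec > 0"
  unfolding cdec_def using kappa mM(1) D1(1) by simp

lemma Xf_deriv_le:
  assumes t: "t > 0"
  shows "\<exists>X'. (Xf has_real_derivative X') (at t) \<and> X' \<le> - cdec * Xf t"
proof -
  have w: "D1 powr (- \<alpha>) \<le> psi_sing \<alpha> (norm (q k t - q i t))"
    if "i \<in> {1..N}" "k \<in> {1..N}" "i \<noteq> k" for i k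
  proof -
    have "q k t \<noteq> q i t" using noncoll[of t k i] that t by auto
    then have "norm (q k t - q i t) > 0" by simp
    then show ?thesis unfolding psi_sing_def using D1(2)[of t k i] that t alpha
      by (intro powr_mono2') auto
  qed
  have e: "norm (Ext {1..N} i t) \<le> 0" for i unfolding Ext_def by simp
  have "(\<Sum>i\<in>{1..N}. \<Sum>j\<in>{1..N}. 2 * inner (p i t - p j t) (Fp i t - Fp j t))
     \<le> - (2 * \<kappa> * real (card {1..N}) * mm / real N) * D1 powr (- \<alpha>) * XC {1..N} t
        + 4 * (real (card {1..N}))\<^sup>2 * 0 * sqrt (XC {1..N} t)"
    by (rule XC_ineq[OF order_refl t _ w e]) auto
  also have "\<dots> = - cdec * Xf t" unfolding cdec_def Xf_def using N by simp
  finally show ?thesis using XC_deriv[OF order_refl t] unfolding Xf_def by blast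
qed

lemma Xf_decay:
  assumes "t \<ge> 1"
  shows "Xf t \<le> Xf 1 * exp (- cdec * (t - 1))"
proof -
  define X' where "X' s = (SOME X'. (Xf has_real_derivative X') (at s) \<and> X' \<le> - cdec * Xf s)" for s
  have X': "(Xf has_real_derivative X' s) (at s) \<and> X' s \<le> - cdec * Xf s" if "s \<ge> 1" for s
    unfolding X'_def by (rule someI_ex) (rule Xf_deriv_le, use that in simp)
  show ?thesis by (rule exp_decay[OF assms]) (use X' in auto)
qed

definition "\<beta> = cdec / 2"
definition "K0 = MM * sqrt (Xf 1) * exp \<beta>"

lemma beta_pos: "\<beta> > 0" unfolding \<beta>_def using cdec_pos by simp
lemma Xf_nonneg: "Xf t \<ge> 0" unfolding Xf_def by (rule XC_nonneg)
lemma K0_nonneg: "K0 \<ge> 0" unfolding K0_def using MM_pos Xf_nonneg[of 1] by simp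

lemma dp_decay:
  assumes "t \<ge> 1" "i \<in> {1..N}" "k \<in> {1..N}"
  shows "norm (p i t - p k t) \<le> sqrt (Xf 1) * exp \<beta> * exp (- \<beta> * t)"
proof -
  have "norm (p i t - p k t) \<le> sqrt (Xf t)" unfolding Xf_def
    by (rule norm_le_sqrt_XC) (use assms in auto)
  also have "\<dots> \<le> sqrt (Xf 1 * exp (- cdec * (t - 1)))"
    using Xf_decay[OF assms(1)] by simp
  also have "exp (- cdec * (t - 1)) = (exp \<beta> * exp (- \<beta> * t))\<^sup>2"
    unfolding \<beta>_def power2_eq_square by (simp add: exp_add[symmetric] algebra_simps)
  also have "sqrt (Xf 1 * (exp \<beta> * exp (- \<beta> * t))\<^sup>2) = sqrt (Xf 1) * exp \<beta> * exp (- \<beta> * t)"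
    by (simp add: real_sqrt_mult)
  finally show ?thesis .
qed

lemma du_decay:
  assumes "t \<ge> 1" "i \<in> {1..N}" "k \<in> {1..N}"
  shows "norm (u i t - u k t) \<le> K0 * exp (- \<beta> * t)"
proof -
  have "norm (u i t - u k t) \<le> MM * norm (p i t - p k t)"
    by (rule u_lip) (use assms in auto)
  also have "\<dots> \<le> MM * (sqrt (Xf 1) * exp \<beta> * exp (- \<beta> * t))"
    using dp_decay[OF assms] MM_pos by (intro mult_left_mono) auto
  finally show ?thesis unfolding K0_def by (simp add: algebra_simps)
qed

definition "\<rho> s = K0 / \<beta> * exp (- \<beta> * s)"

lemma rho_nonneg: "\<rho> s \<ge> 0" unfolding \<rho>_def using K0_nonneg beta_pos by simp

lemma rho_tendsto: "(\<rho> \<longlongrightarrow> 0) at_top"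
proof -
  have "((\<lambda>s. exp (- \<beta> * s)) \<longlongrightarrow> 0) at_top"
  proof -
    have "LIM s at_top. \<beta> * s :> at_top"
      by (rule filterlim_tendsto_pos_mult_at_top[OF tendsto_const beta_pos filterlim_ident])
    then have "LIM s at_top. - (\<beta> * s) :> at_bot"
      by (simp add: filterlim_uminus_at_top[symmetric])
    then show ?thesis by (auto intro: filterlim_compose[OF exp_at_bot])
  qed
  then have "((\<lambda>s. K0 / \<beta> * exp (- \<beta> * s)) \<longlongrightarrow> K0 / \<beta> * 0) at_top"
    by (intro tendsto_mult tendsto_const)
  then show ?thesis unfolding \<rho>_def[abs_def] by simp
qed

lemma q_cauchy:
  assumes "1 \<le> s" "s \<le> t" "i \<in> {1..N}" "j \<in> {1..N}"
  shows "norm ((q i t - q j t) - (q i s - q j s)) \<le> \<rho> s"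
proof -
  have "norm ((q i t - q j t) - (q i s - q j s))
      \<le> (\<lambda>x. - (K0 / \<beta>) * exp (- \<beta> * x)) t - (\<lambda>x. - (K0 / \<beta>) * exp (- \<beta> * x)) s"
  proof (rule mvt_bound[OF assms(2), where f' = "\<lambda>x. u i x - u j x" and \<phi>' = "\<lambda>x. K0 * exp (- \<beta> * x)"])
    fix x assume x: "s \<le> x" "x \<le> t"
    show "((\<lambda>x. q i x - q j x) has_vector_derivative u i x - u j x) (at x)"
      using x assms by (intro has_vector_derivative_diff qd) auto
    show "((\<lambda>x. - (K0 / \<beta>) * exp (- \<beta> * x)) has_real_derivative K0 * exp (- \<beta> * x)) (at x)"
      using beta_pos by (auto intro!: derivative_eq_intros)
    show "norm (u i x - u j x) \<le> K0 * exp (- \<beta> * x)"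
      using x assms by (intro du_decay) auto
  qed
  also have "\<dots> \<le> \<rho> s"
    unfolding \<rho>_def using K0_nonneg beta_pos by (simp add: field_simps)
  finally show ?thesis .
qed

definition "r i j t = norm (q i t - q j t)"

lemma r_cauchy:
  assumes "1 \<le> s" "s \<le> t" "i \<in> {1..N}" "j \<in> {1..N}"
  shows "\<bar>r i j t - r i j s\<bar> \<le> \<rho> s"
  unfolding r_def using q_cauchy[OF assms] norm_triangle_ineq3 order_trans by blast

lemma dichotomy:
  assumes "i \<in> {1..N}" "j \<in> {1..N}"
  shows "(r i j \<longlongrightarrow> 0) at_top \<or> (\<exists>\<delta>>0. eventually (\<lambda>t. \<delta> \<le> r i j t) at_top)"
proof (cases "\<exists>s\<ge>1. r i j s > 2 * \<rho> s")
  case True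
  then obtain s where s: "s \<ge> 1" "r i j s > 2 * \<rho> s" by auto
  have "eventually (\<lambda>t. r i j s - \<rho> s \<le> r i j t) at_top"
    unfolding eventually_at_top_linorder
  proof (intro exI allI impI)
    fix t assume "t \<ge> s"
    then show "r i j s - \<rho> s \<le> r i j t" using r_cauchy[OF s(1) _ assms] by force
  qed
  moreover have "r i j s - \<rho> s > 0" using s rho_nonneg[of s] by linarith
  ultimately show ?thesis by blast
next
  case False
  have "(r i j \<longlongrightarrow> 0) at_top"
  proof (rule tendsto_sandwich[where f = "\<lambda>_. 0" and h = "\<lambda>s. 2 * \<rho> s"])
    show "eventually (\<lambda>n. 0 \<le> r i j n) at_top" unfolding r_def by simp
    show "eventually (\<lambda>n. r i j n \<le> 2 * \<rho> n) at_top"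
      unfolding eventually_at_top_linorder using False by (intro exI[of _ 1]) auto
    show "((\<lambda>s. 2 * \<rho> s) \<longlongrightarrow> 0) at_top"
      using tendsto_mult[OF tendsto_const rho_tendsto, of 2] by simp
  qed simp
  then show ?thesis by blast
qed

lemma pair_positive:
  assumes ij: "i \<in> {1..N}" "j \<in> {1..N}" "i \<noteq> j"
    and ev: "\<exists>\<delta>>0. eventually (\<lambda>t. \<delta> \<le> r i j t) at_top"
  shows "\<exists>c>0. \<forall>t\<ge>0. c \<le> r i j t"
proof -
  obtain \<delta> T where d: "\<delta> > 0" and T: "\<And>t. t \<ge> T \<Longrightarrow> \<delta> \<le> r i j t"
    using ev unfolding eventually_at_top_linorder by blast
  define T' where "T' = max T 0"
  have cont: "continuous_on {0..T'} (r i j)"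
  proof -
    have "continuous_on {0..T'} (\<lambda>t. q i t - q j t)"
      using qcont[OF ij(1)] qcont[OF ij(2)]
      by (intro continuous_on_diff) (auto elim: continuous_on_subset)
    then show ?thesis unfolding r_def[abs_def] by (intro continuous_on_norm)
  qed
  obtain t0 where t0: "t0 \<in> {0..T'}" "\<And>t. t \<in> {0..T'} \<Longrightarrow> r i j t0 \<le> r i j t"
    using continuous_attains_inf[OF compact_Icc _ cont] T'_def by fastforce
  have pos: "r i j t0 > 0" unfolding r_def using noncoll[of t0 i j] ij t0(1) by auto
  show ?thesis
  proof (intro exI[of _ "min \<delta> (r i j t0)"] conjI allI impI)
    fix t :: real assume "t \<ge> 0"
    show "min \<delta> (r i j t0) \<le> r i j t"
    proof (cases "t \<le> T'")
      case True then show ?thesis using t0(2)[of t] \<open>t \<ge> 0\<close> by auto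
    next
      case False
      then have "\<delta> \<le> r i j t" using T[of t] T'_def by auto
      then show ?thesis by linarith
    qed
  qed (use d pos in auto)
qed

end

locale cluster = csm N \<kappa> \<alpha> g q p
  for N :: nat and \<kappa> \<alpha> :: real and g :: "real \<Rightarrow> real" and q p :: "nat \<Rightarrow> real \<Rightarrow> 'a::euclidean_space" +
  fixes C :: "nat set" and i0 j0 :: nat and \<delta> T1 :: real
  assumes C: "C \<subseteq> {1..N}" and i0: "i0 \<in> C" and j0: "j0 \<in> C" and ij0: "i0 \<noteq> j0"
    and \<delta>: "\<delta> > 0" and T1: "T1 \<ge> 1"
    and sep: "\<And>t i k. t \<ge> T1 \<Longrightarrow> i \<in> C \<Longrightarrow> k \<in> {1..N} - C \<Longrightarrow> \<delta> \<le> r i k t"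
begin

definition "S2 t = (\<Sum>i\<in>C. \<Sum>j\<in>C. (norm (q i t - q j t))\<^sup>2)"
definition "S2' t = (\<Sum>i\<in>C. \<Sum>j\<in>C. 2 * inner (q i t - q j t) (u i t - u j t))"
definition "\<Lambda> t = S2 t powr (- \<alpha> / 2)"
definition "V t = S2 t powr ((1 - \<alpha>) / 2)"
definition "V' t = ((1 - \<alpha>) / 2) * S2 t powr ((1 - \<alpha>) / 2 - 1) * S2' t"
definition "A = \<kappa> * real (card C) * mm / real N"
definition "B = 2 * (real (card C))\<^sup>2 * \<kappa> * \<delta> powr (- \<alpha>) * K0"
definition "\<gamma> = (\<alpha> - 1) * (real (card C))\<^sup>2 * MM"

lemma finC: "finite C" using C finite_subset by blast
lemma cardC: "card C > 0" using finC i0 card_gt_0_iff by blast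

lemma A_pos: "A > 0" unfolding A_def using kappa cardC mM(1) N by simp
lemma B_nonneg: "B \<ge> 0" unfolding B_def using kappa K0_nonneg \<delta> by simp
lemma \<gamma>_nonneg: "\<gamma> \<ge> 0" unfolding \<gamma>_def using alpha MM_pos by simp

lemma S2_pos: "t \<ge> 0 \<Longrightarrow> S2 t > 0"
proof -
  assume t: "t \<ge> 0"
  have "i0 \<in> {1..N}" "j0 \<in> {1..N}" using C i0 j0 by auto
  then have "q i0 t \<noteq> q j0 t" using noncoll[OF t] ij0 by blast
  then have "0 < (norm (q i0 t - q j0 t))\<^sup>2" by simp
  also have "\<dots> \<le> (\<Sum>j\<in>C. (norm (q i0 t - q j t))\<^sup>2)"
    by (rule member_le_sum) (use j0 finC in auto)
  also have "\<dots> \<le> S2 t" unfolding S2_def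
    by (rule member_le_sum[where f = "\<lambda>i. \<Sum>j\<in>C. (norm (q i t - q j t))\<^sup>2"]) (use i0 finC in \<open>auto intro: sum_nonneg\<close>)
  finally show ?thesis .
qed

lemma S2_nonneg: "S2 t \<ge> 0" unfolding S2_def by (intro sum_nonneg) auto

lemma r_le_sqrt_S2:
  assumes "i \<in> C" "k \<in> C"
  shows "norm (q i t - q k t) \<le> sqrt (S2 t)"
proof -
  have "(norm (q i t - q k t))\<^sup>2 \<le> (\<Sum>j\<in>C. (norm (q i t - q j t))\<^sup>2)"
    by (rule member_le_sum) (use assms finC in auto)
  also have "\<dots> \<le> S2 t" unfolding S2_def
    by (rule member_le_sum[where f = "\<lambda>i. \<Sum>j\<in>C. (norm (q i t - q j t))\<^sup>2"]) (use assms finC in \<open>auto intro: sum_nonneg\<close>)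
  finally show ?thesis by (rule real_le_rsqrt)
qed

lemma S2_deriv: "t > 0 \<Longrightarrow> (S2 has_real_derivative S2' t) (at t)"
  unfolding S2_def[abs_def] S2'_def
  by (intro DERIV_sum deriv_normsq has_vector_derivative_diff qd) (use C in auto)

lemma S2'_bound:
  assumes t: "t > 0"
  shows "\<bar>S2' t\<bar> \<le> 2 * (real (card C))\<^sup>2 * MM * sqrt (S2 t) * sqrt (XC C t)"
proof -
  have "\<bar>S2' t\<bar> \<le> (\<Sum>i\<in>C. \<Sum>j\<in>C. \<bar>2 * inner (q i t - q j t) (u i t - u j t)\<bar>)"
    unfolding S2'_def by (rule order_trans[OF sum_abs sum_mono]) (rule sum_abs)
  also have "\<dots> \<le> (\<Sum>i\<in>C. \<Sum>j\<in>C. 2 * MM * sqrt (S2 t) * sqrt (XC C t))"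
  proof (intro sum_mono)
    fix i j assume ij: "i \<in> C" "j \<in> C"
    have "\<bar>inner (q i t - q j t) (u i t - u j t)\<bar> \<le> norm (q i t - q j t) * norm (u i t - u j t)"
      by (rule Cauchy_Schwarz_ineq2)
    also have "\<dots> \<le> sqrt (S2 t) * (MM * sqrt (XC C t))"
    proof (rule mult_mono)
      show "norm (q i t - q j t) \<le> sqrt (S2 t)" by (rule r_le_sqrt_S2[OF ij])
      have "norm (u i t - u j t) \<le> MM * norm (p i t - p j t)"
        by (rule u_lip) (use ij C t in auto)
      also have "\<dots> \<le> MM * sqrt (XC C t)"
        using norm_le_sqrt_XC[OF finC ij] MM_pos by (intro mult_left_mono) auto
      finally show "norm (u i t - u j t) \<le> MM * sqrt (XC C t)" .
    qed (use S2_nonneg in auto)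
    finally show "\<bar>2 * inner (q i t - q j t) (u i t - u j t)\<bar> \<le> 2 * MM * sqrt (S2 t) * sqrt (XC C t)"
      by (simp add: abs_mult algebra_simps)
  qed
  also have "\<dots> = 2 * (real (card C))\<^sup>2 * MM * sqrt (S2 t) * sqrt (XC C t)"
    by (simp add: power2_eq_square algebra_simps)
  finally show ?thesis .
qed

lemma V_deriv: "t > 0 \<Longrightarrow> (V has_real_derivative V' t) (at t)"
proof -
  assume t: "t > 0"
  have "((\<lambda>x. S2 x powr ((1 - \<alpha>) / 2)) has_real_derivative
          ((1 - \<alpha>) / 2) * S2 t powr ((1 - \<alpha>) / 2 - of_nat 1) * S2' t) (at t)"
    by (rule DERIV_fun_powr[OF S2_deriv[OF t] S2_pos]) (use t in simp)
  then show ?thesis unfolding V_def[abs_def] V'_def by simp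
qed

lemma V'_bound:
  assumes t: "t > 0"
  shows "V' t \<le> \<gamma> * \<Lambda> t * sqrt (XC C t)"
proof -
  have S: "S2 t > 0" using S2_pos t by simp
  have a: "(1 - \<alpha>) / 2 \<le> 0" using alpha by simp
  have P: "S2 t powr ((1 - \<alpha>) / 2 - 1) \<ge> 0" by simp
  have "V' t \<le> ((\<alpha> - 1) / 2) * S2 t powr ((1 - \<alpha>) / 2 - 1) * \<bar>S2' t\<bar>"
  proof -
    have "- S2' t \<le> \<bar>S2' t\<bar>" by simp
    from mult_left_mono[OF this, of "(\<alpha> - 1) / 2"]
    have "((1 - \<alpha>) / 2) * S2' t \<le> ((\<alpha> - 1) / 2) * \<bar>S2' t\<bar>"
      using alpha by (simp add: algebra_simps)
    from mult_left_mono[OF this P] show ?thesis unfolding V'_def by (simp add: algebra_simps)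
  qed
  also have "\<dots> \<le> ((\<alpha> - 1) / 2) * S2 t powr ((1 - \<alpha>) / 2 - 1) *
          (2 * (real (card C))\<^sup>2 * MM * sqrt (S2 t) * sqrt (XC C t))"
    using alpha P S2'_bound[OF t] by (intro mult_left_mono) auto
  also have "S2 t powr ((1 - \<alpha>) / 2 - 1) * sqrt (S2 t) = \<Lambda> t"
  proof -
    have "sqrt (S2 t) = S2 t powr (1/2)" using S by (simp add: powr_half_sqrt)
    then have "S2 t powr ((1 - \<alpha>) / 2 - 1) * sqrt (S2 t) = S2 t powr ((1 - \<alpha>) / 2 - 1 + 1/2)"
      using S by (simp only: powr_add)
    also have "(1 - \<alpha>) / 2 - 1 + 1/2 = - \<alpha> / 2" by (simp add: field_simps)
    finally show ?thesis unfolding \<Lambda>_def .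
  qed
  then have "((\<alpha> - 1) / 2) * S2 t powr ((1 - \<alpha>) / 2 - 1) *
          (2 * (real (card C))\<^sup>2 * MM * sqrt (S2 t) * sqrt (XC C t)) = \<gamma> * \<Lambda> t * sqrt (XC C t)"
  proof -
    have gen: "(a / 2) * b * (2 * c * d * e * f) = a * c * d * (b * e) * f" for a b c d e f :: real
      by simp
    show ?thesis unfolding \<gamma>_def gen \<open>S2 t powr ((1 - \<alpha>) / 2 - 1) * sqrt (S2 t) = \<Lambda> t\<close> by simp
  qed
  finally show ?thesis .
qed

lemma \<Lambda>_le_psi:
  assumes t: "t \<ge> 0" and ik: "i \<in> C" "k \<in> C" "i \<noteq> k"
  shows "\<Lambda> t \<le> psi_sing \<alpha> (norm (q k t - q i t))"
proof -
  have S: "S2 t > 0" using S2_pos t by simp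
  have "k \<in> {1..N}" "i \<in> {1..N}" using C ik by auto
  then have "q k t \<noteq> q i t" using noncoll[OF t] ik(3) by metis
  then have pos: "norm (q k t - q i t) > 0" by simp
  have "\<Lambda> t = (sqrt (S2 t)) powr (- \<alpha>)"
    unfolding \<Lambda>_def using S by (simp add: powr_half_sqrt[symmetric] powr_powr)
  also have "\<dots> \<le> norm (q k t - q i t) powr (- \<alpha>)"
    using pos r_le_sqrt_S2[OF ik(2) ik(1)] alpha by (intro powr_mono2') auto
  finally show ?thesis unfolding psi_sing_def .
qed

lemma Ext_bound:
  assumes t: "t \<ge> T1" and i: "i \<in> C"
  shows "norm (Ext C i t) \<le> \<kappa> * \<delta> powr (- \<alpha>) * K0 * exp (- \<beta> * t)"
proof -
  have "norm (Ext C i t) = (\<kappa> / real N) * norm (\<Sum>k\<in>{1..N} - C. psi_sing \<alpha> (norm (q k t - q i t)) *\<^sub>R (u k t - u i t))"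
    unfolding Ext_def using kappa by simp
  also have "\<dots> \<le> (\<kappa> / real N) * (\<Sum>k\<in>{1..N} - C. norm (psi_sing \<alpha> (norm (q k t - q i t)) *\<^sub>R (u k t - u i t)))"
    using kappa by (intro mult_left_mono norm_sum) auto
  also have "\<dots> \<le> (\<kappa> / real N) * (\<Sum>k\<in>{1..N} - C. \<delta> powr (- \<alpha>) * (K0 * exp (- \<beta> * t)))"
  proof (intro mult_left_mono sum_mono)
    fix k assume k: "k \<in> {1..N} - C"
    have d: "\<delta> \<le> norm (q k t - q i t)" using sep[OF t i k] unfolding r_def by (simp add: norm_minus_commute)
    have "psi_sing \<alpha> (norm (q k t - q i t)) \<le> \<delta> powr (- \<alpha>)"
      unfolding psi_sing_def using d \<delta> alpha by (intro powr_mono2') auto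
    moreover have "norm (u k t - u i t) \<le> K0 * exp (- \<beta> * t)"
      by (rule du_decay) (use t T1 k i C in auto)
    ultimately show "norm (psi_sing \<alpha> (norm (q k t - q i t)) *\<^sub>R (u k t - u i t)) \<le> \<delta> powr (- \<alpha>) * (K0 * exp (- \<beta> * t))"
      unfolding psi_sing_def by (auto intro!: mult_mono)
  qed (use kappa in simp)
  also have "\<dots> = (\<kappa> / real N) * real (card ({1..N} - C)) * (\<delta> powr (- \<alpha>) * (K0 * exp (- \<beta> * t)))"
    by simp
  also have "\<dots> \<le> \<kappa> * (\<delta> powr (- \<alpha>) * (K0 * exp (- \<beta> * t)))"
  proof -
    have "real (card ({1..N} - C)) \<le> real N"
      using card_mono[of "{1..N}" "{1..N} - C"] by auto
    then have "(\<kappa> / real N) * real (card ({1..N} - C)) \<le> \<kappa>"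
      using kappa N by (simp add: field_simps)
    then show ?thesis using K0_nonneg by (intro mult_right_mono) auto
  qed
  finally show ?thesis by (simp add: algebra_simps)
qed

lemma XC_cluster:
  assumes t: "t \<ge> T1"
  shows "\<exists>X'. (XC C has_real_derivative X') (at t) \<and>
       X' \<le> - 2 * A * \<Lambda> t * XC C t + 2 * B * exp (- \<beta> * t) * sqrt (XC C t)"
proof -
  have t0: "t > 0" using t T1 by simp
  have "(\<Sum>i\<in>C. \<Sum>j\<in>C. 2 * inner (p i t - p j t) (Fp i t - Fp j t))
     \<le> - (2 * \<kappa> * real (card C) * mm / real N) * \<Lambda> t * XC C t
        + 4 * (real (card C))\<^sup>2 * (\<kappa> * \<delta> powr (- \<alpha>) * K0 * exp (- \<beta> * t)) * sqrt (XC C t)"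
    by (rule XC_ineq[OF C t0]) (use \<Lambda>_le_psi t0 Ext_bound t in \<open>auto simp: \<Lambda>_def\<close>)
  also have "\<dots> = - 2 * A * \<Lambda> t * XC C t + 2 * B * exp (- \<beta> * t) * sqrt (XC C t)"
    unfolding A_def B_def by (simp add: algebra_simps)
  finally show ?thesis using XC_deriv[OF C t0] by blast
qed

lemma \<Lambda>_nonneg: "\<Lambda> t \<ge> 0" unfolding \<Lambda>_def by simp

lemma \<Lambda>_cont:
  assumes "a > 0"
  shows "continuous_on {a..b} \<Lambda>"
proof (intro continuous_at_imp_continuous_on ballI)
  fix x assume "x \<in> {a..b}"
  then have x: "x > 0" using assms by auto
  have "((\<lambda>x. S2 x powr (- \<alpha> / 2)) has_real_derivative
          (- \<alpha> / 2) * S2 x powr (- \<alpha> / 2 - of_nat 1) * S2' x) (at x)"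
    by (rule DERIV_fun_powr[OF S2_deriv[OF x] S2_pos]) (use x in simp)
  then show "isCont \<Lambda> x" unfolding \<Lambda>_def[abs_def] by (rule DERIV_isCont)
qed

definition "Kf = V T1 + (\<gamma> / A) * sqrt (XC C T1) + \<gamma> * B / (A * \<beta>)"

lemma V_eps:
  assumes t: "t \<ge> T1" and \<epsilon>: "\<epsilon> > 0" and Kt: "\<And>s. T1 \<le> s \<Longrightarrow> s \<le> t \<Longrightarrow> \<Lambda> s \<le> Kt"
  shows "V t \<le> Kf + \<epsilon> * (\<gamma> / A) + \<gamma> * \<epsilon> * Kt * (t - T1)"
proof -
  define W where "W s = sqrt (XC C s + \<epsilon>\<^sup>2)" for s
  define c where "c = \<gamma> * B / (A * \<beta>)"
  define H where "H s = V s + (\<gamma> / A) * W s + c * exp (- \<beta> * s) - \<gamma> * \<epsilon> * Kt * s" for s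
  have c0: "c \<ge> 0" unfolding c_def using \<gamma>_nonneg B_nonneg A_pos beta_pos by simp
  have gA: "\<gamma> / A \<ge> 0" using \<gamma>_nonneg A_pos by simp
  have "H t \<le> H T1"
  proof (rule DERIV_nonpos_imp_nonincreasing[OF t])
    fix s assume s: "T1 \<le> s" "s \<le> t"
    have s0: "s > 0" using s T1 by simp
    obtain X' where X': "(XC C has_real_derivative X') (at s)"
      and X'le: "X' \<le> - 2 * A * \<Lambda> s * XC C s + 2 * B * exp (- \<beta> * s) * sqrt (XC C s)"
      using XC_cluster[OF s(1)] by blast
    define Xs where "Xs = XC C s"
    define Ws where "Ws = sqrt (Xs + \<epsilon>\<^sup>2)"
    define sq where "sq = sqrt Xs"
    define L where "L = \<Lambda> s"
    define E where "E = exp (- \<beta> * s)"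
    have Xs0: "Xs \<ge> 0" unfolding Xs_def by (rule XC_nonneg)
    have Wpos: "Ws > 0" unfolding Ws_def using \<epsilon> Xs0 by (simp add: add_nonneg_pos)
    have sq0: "sq \<ge> 0" unfolding sq_def using Xs0 by simp
    have sqsq: "sq * sq = Xs" unfolding sq_def using Xs0 by simp
    have L0: "L \<ge> 0" unfolding L_def by (rule \<Lambda>_nonneg)
    have E0: "E \<ge> 0" unfolding E_def by simp
    have W_deriv: "(W has_real_derivative X' / (2 * Ws)) (at s)"
    proof -
      have "((\<lambda>s. sqrt (XC C s + \<epsilon>\<^sup>2)) has_real_derivative inverse (sqrt (XC C s + \<epsilon>\<^sup>2)) / 2 * (X' + 0)) (at s)"
        by (rule DERIV_chain2[OF DERIV_real_sqrt DERIV_add[OF X' DERIV_const]])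
           (use XC_nonneg[of C s] \<epsilon> in \<open>simp add: add_nonneg_pos\<close>)
      then show ?thesis unfolding W_def[abs_def] Ws_def Xs_def by (simp add: field_simps)
    qed
    have H_deriv: "(H has_real_derivative
        V' s + (\<gamma> / A) * (X' / (2 * Ws)) + c * (exp (- \<beta> * s) * (- \<beta>)) - \<gamma> * \<epsilon> * Kt) (at s)"
      unfolding H_def[abs_def]
      by (intro derivative_intros V_deriv[OF s0] W_deriv DERIV_cmult DERIV_exp) (auto intro!: derivative_eq_intros)
    have Ws_le: "Ws \<le> sq + \<epsilon>"
    proof -
      have "Xs + \<epsilon>\<^sup>2 \<le> (sq + \<epsilon>)\<^sup>2" using sqsq sq0 \<epsilon> by (simp add: power2_eq_square algebra_simps)
      then have "Ws \<le> sqrt ((sq + \<epsilon>)\<^sup>2)" unfolding Ws_def by (rule real_sqrt_le_mono)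
      then show ?thesis using sq0 \<epsilon> by simp
    qed
    have ratio1: "sq - \<epsilon> \<le> Xs / Ws"
    proof (cases "sq \<le> \<epsilon>")
      case True
      then show ?thesis using Xs0 Wpos by (smt (verit) divide_nonneg_pos)
    next
      case False
      have "(sq - \<epsilon>) * Ws \<le> (sq - \<epsilon>) * (sq + \<epsilon>)" using False Ws_le by (intro mult_left_mono) auto
      also have "\<dots> \<le> Xs" using sqsq by (simp add: algebra_simps)
      finally show ?thesis using Wpos by (simp add: pos_le_divide_eq)
    qed
    have ratio2: "sq / Ws \<le> 1"
    proof -
      have "sq \<le> Ws" unfolding sq_def Ws_def by (rule real_sqrt_le_mono) simp
      then show ?thesis using Wpos by simp
    qed
    have W'le: "X' / (2 * Ws) \<le> - A * L * (sq - \<epsilon>) + B * E"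
    proof -
      have "X' / (2 * Ws) \<le> (- 2 * A * L * Xs + 2 * B * E * sq) / (2 * Ws)"
        using X'le Wpos unfolding Xs_def L_def E_def sq_def by (intro divide_right_mono) auto
      also have "\<dots> = - (A * L) * (Xs / Ws) + (B * E) * (sq / Ws)"
        using Wpos by (simp add: field_simps)
      also have "\<dots> \<le> - (A * L) * (sq - \<epsilon>) + (B * E) * 1"
      proof -
        have "(A * L) * (sq - \<epsilon>) \<le> (A * L) * (Xs / Ws)"
          by (rule mult_left_mono[OF ratio1]) (use A_pos L0 in simp)
        moreover have "(B * E) * (sq / Ws) \<le> (B * E) * 1"
          by (rule mult_left_mono[OF ratio2]) (use B_nonneg E0 in simp)
        ultimately show ?thesis by (simp only: mult_minus_left)
      qed
      finally show ?thesis by simp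
    qed
    have V'le: "V' s \<le> \<gamma> * L * sq" unfolding L_def sq_def Xs_def by (rule V'_bound[OF s0])
    have LK: "L \<le> Kt" unfolding L_def using Kt s by simp
    have "V' s + (\<gamma> / A) * (X' / (2 * Ws)) + c * (exp (- \<beta> * s) * (- \<beta>)) - \<gamma> * \<epsilon> * Kt \<le> 0"
    proof -
      have "(\<gamma> / A) * (X' / (2 * Ws)) \<le> (\<gamma> / A) * (- A * L * (sq - \<epsilon>) + B * E)"
        using W'le gA by (rule mult_left_mono)
      also have "\<dots> = - \<gamma> * L * sq + \<gamma> * L * \<epsilon> + (\<gamma> * B / A) * E"
        using A_pos by (simp add: field_simps)
      finally have i1: "(\<gamma> / A) * (X' / (2 * Ws)) \<le> - \<gamma> * L * sq + \<gamma> * L * \<epsilon> + (\<gamma> * B / A) * E" .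
      have i2: "c * (exp (- \<beta> * s) * (- \<beta>)) = - (\<gamma> * B / A) * E"
        unfolding c_def E_def using beta_pos A_pos by (simp add: field_simps)
      have i3: "\<gamma> * L * \<epsilon> \<le> \<gamma> * \<epsilon> * Kt"
        using mult_left_mono[OF LK, of "\<gamma> * \<epsilon>"] \<gamma>_nonneg \<epsilon> by (simp add: algebra_simps)
      show ?thesis using i1 i2 i3 V'le by linarith
    qed
    then show "\<exists>y. (H has_real_derivative y) (at s) \<and> y \<le> 0" using H_deriv by blast
  qed
  then have "V t \<le> V T1 + (\<gamma> / A) * W T1 + c * exp (- \<beta> * T1) + \<gamma> * \<epsilon> * Kt * (t - T1)
               - (\<gamma> / A) * W t - c * exp (- \<beta> * t)"
    unfolding H_def by (simp add: algebra_simps)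
  also have "\<dots> \<le> V T1 + (\<gamma> / A) * (sqrt (XC C T1) + \<epsilon>) + c * 1 + \<gamma> * \<epsilon> * Kt * (t - T1)"
  proof -
    have "W T1 \<le> sqrt (XC C T1) + \<epsilon>"
    proof -
      have "XC C T1 + \<epsilon>\<^sup>2 \<le> (sqrt (XC C T1) + \<epsilon>)\<^sup>2"
        using XC_nonneg[of C T1] \<epsilon> by (simp add: power2_eq_square algebra_simps)
      then have "W T1 \<le> sqrt ((sqrt (XC C T1) + \<epsilon>)\<^sup>2)" unfolding W_def by (rule real_sqrt_le_mono)
      then show ?thesis using \<epsilon> XC_nonneg[of C T1] by simp
    qed
    then have a1: "(\<gamma> / A) * W T1 \<le> (\<gamma> / A) * (sqrt (XC C T1) + \<epsilon>)" using gA by (rule mult_left_mono)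
    have "exp (- \<beta> * T1) \<le> 1" using beta_pos T1 by simp
    then have a2: "c * exp (- \<beta> * T1) \<le> c * 1" using c0 by (rule mult_left_mono)
    have a3: "(\<gamma> / A) * W t \<ge> 0" using gA XC_nonneg[of C t] unfolding W_def by (intro mult_nonneg_nonneg) auto
    have a4: "c * exp (- \<beta> * t) \<ge> 0" using c0 by simp
    show ?thesis using a1 a2 a3 a4 by linarith
  qed
  also have "\<dots> = Kf + \<epsilon> * (\<gamma> / A) + \<gamma> * \<epsilon> * Kt * (t - T1)"
    unfolding Kf_def c_def by (simp add: algebra_simps add_divide_distrib)
  finally show ?thesis .
qed

lemma V_bound:
  assumes t: "t \<ge> T1"
  shows "V t \<le> Kf"
proof -
  obtain s0 where s0: "s0 \<in> {T1..t}" "\<And>s. s \<in> {T1..t} \<Longrightarrow> \<Lambda> s \<le> \<Lambda> s0"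
    using continuous_attains_sup[OF compact_Icc _ \<Lambda>_cont[of T1 t]] t T1 by fastforce
  define Kt where "Kt = \<Lambda> s0"
  define Z where "Z = \<gamma> / A + \<gamma> * Kt * (t - T1)"
  have Z0: "Z \<ge> 0" unfolding Z_def Kt_def using \<gamma>_nonneg A_pos \<Lambda>_nonneg[of s0] t by simp
  show ?thesis
  proof (rule field_le_epsilon)
    fix e :: real assume e: "e > 0"
    define \<epsilon> where "\<epsilon> = e / (Z + 1)"
    have \<epsilon>: "\<epsilon> > 0" unfolding \<epsilon>_def using e Z0 by simp
    have h1: "V t \<le> Kf + \<epsilon> * (\<gamma> / A) + \<gamma> * \<epsilon> * Kt * (t - T1)"
      by (rule V_eps[OF t \<epsilon>]) (use s0 in \<open>auto simp: Kt_def\<close>)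
    have h2: "\<epsilon> * (\<gamma> / A) + \<gamma> * \<epsilon> * Kt * (t - T1) = \<epsilon> * Z"
      unfolding Z_def by (simp add: algebra_simps)
    have h3: "\<epsilon> * Z \<le> e"
    proof -
      have "\<epsilon> * Z \<le> \<epsilon> * (Z + 1)" using \<epsilon> by simp
      also have "\<dots> = e" unfolding \<epsilon>_def using Z0 by simp
      finally show ?thesis .
    qed
    show "V t \<le> Kf + e" using h1 h2 h3 by linarith
  qed
qed

lemma S2_lower: "\<exists>c>0. \<forall>t\<ge>T1. c \<le> S2 t"
proof -
  have VT1: "V T1 > 0" unfolding V_def using S2_pos[of T1] T1 by simp
  have Kf: "Kf > 0" unfolding Kf_def using VT1 \<gamma>_nonneg A_pos B_nonneg beta_pos XC_nonneg[of C T1]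
    by (intro add_pos_nonneg mult_nonneg_nonneg divide_nonneg_nonneg) auto
  define ex where "ex = 2 / (1 - \<alpha>)"
  have ex: "ex \<le> 0" unfolding ex_def using alpha by (simp add: divide_nonpos_neg)
  have "Kf powr ex \<le> S2 t" if t: "t \<ge> T1" for t
  proof -
    have S: "S2 t > 0" using S2_pos t T1 by simp
    have Vp: "V t > 0" unfolding V_def using S by simp
    have "Kf powr ex \<le> V t powr ex" using V_bound[OF t] Vp ex by (intro powr_mono2') auto
    also have "V t powr ex = S2 t"
    proof -
      have "V t powr ex = S2 t powr ((1 - \<alpha>) / 2 * ex)" unfolding V_def by (simp add: powr_powr)
      also have "(1 - \<alpha>) / 2 * ex = 1" unfolding ex_def using alpha by simp
      finally show ?thesis using S by simp
    qed
    finally show ?thesis .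
  qed
  moreover have "Kf powr ex > 0" using Kf by simp
  ultimately show ?thesis by blast
qed

end

context csm begin

lemma r0: "r i i t = 0" unfolding r_def by simp
lemma rsym: "r i j t = r j i t" unfolding r_def by (simp add: norm_minus_commute)
lemma rtri: "r i k t \<le> r i j t + r j k t"
  unfolding r_def using norm_triangle_ineq[of "q i t - q j t" "q j t - q k t"] by simp
lemma r_nonneg: "r i j t \<ge> 0" unfolding r_def by simp

lemma tendsto_via_tri:
  assumes "(r a b \<longlongrightarrow> 0) at_top" "(r b c \<longlongrightarrow> 0) at_top"
  shows "(r a c \<longlongrightarrow> 0) at_top"
proof (rule tendsto_sandwich[where f = "\<lambda>_. 0" and h = "\<lambda>t. r a b t + r b c t"])
  show "\<forall>\<^sub>F n in at_top. 0 \<le> r a c n" by (simp add: r_nonneg)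
  show "\<forall>\<^sub>F n in at_top. r a c n \<le> r a b n + r b c n" by (simp add: rtri)
  show "((\<lambda>t. r a b t + r b c t) \<longlongrightarrow> 0) at_top" using tendsto_add[OF assms] by simp
qed simp

lemma no_collapse:
  assumes i0: "i0 \<in> {1..N}" and j0: "j0 \<in> {1..N}" and ij0: "i0 \<noteq> j0"
    and lim: "(r i0 j0 \<longlongrightarrow> 0) at_top"
  shows False
proof -
  define C where "C = {k \<in> {1..N}. (r i0 k \<longlongrightarrow> 0) at_top}"
  have C: "C \<subseteq> {1..N}" unfolding C_def by auto
  have finC: "finite C" using C finite_subset by blast
  have "r i0 i0 = (\<lambda>t. 0)" by (simp add: fun_eq_iff r0)
  then have i0C: "i0 \<in> C" unfolding C_def using i0 by simp
  have j0C: "j0 \<in> C" unfolding C_def using j0 lim by simp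
  have symlim: "(r b a \<longlongrightarrow> 0) at_top" if "(r a b \<longlongrightarrow> 0) at_top" for a b
  proof -
    have "r b a = r a b" by (simp add: fun_eq_iff rsym)
    then show ?thesis using that by simp
  qed
  have inC: "(r i k \<longlongrightarrow> 0) at_top" if "i \<in> C" "k \<in> C" for i k
    using that unfolding C_def by (auto intro: tendsto_via_tri[OF symlim])
  have out: "\<exists>\<delta>>0. eventually (\<lambda>t. \<delta> \<le> r (fst x) (snd x) t) at_top" if x: "x \<in> C \<times> ({1..N} - C)" for x
  proof -
    obtain i k where ik: "x = (i, k)" "i \<in> C" "k \<in> {1..N} - C" using x by auto
    have notlim: "\<not> (r i k \<longlongrightarrow> 0) at_top"
    proof
      assume "(r i k \<longlongrightarrow> 0) at_top"
      then have "(r i0 k \<longlongrightarrow> 0) at_top"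
        using ik(2) unfolding C_def by (auto intro: tendsto_via_tri)
      then show False using ik(3) unfolding C_def by auto
    qed
    then show ?thesis using dichotomy[of i k] ik C by auto
  qed
  obtain \<delta> where \<delta>: "\<delta> > 0" and ev: "eventually (\<lambda>t. \<forall>x\<in>C \<times> ({1..N} - C). \<delta> \<le> r (fst x) (snd x) t) at_top"
    using finite_eventually_lower[of "C \<times> ({1..N} - C)" "\<lambda>x t. r (fst x) (snd x) t"] out finC by auto
  obtain T0 where T0: "\<And>t. t \<ge> T0 \<Longrightarrow> \<forall>x\<in>C \<times> ({1..N} - C). \<delta> \<le> r (fst x) (snd x) t"
    using ev unfolding eventually_at_top_linorder by blast
  define T1 where "T1 = max T0 1"
  interpret cl: cluster N \<kappa> \<alpha> g q p C i0 j0 \<delta> T1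
  proof (intro cluster.intro cluster_axioms.intro csm_axioms)
    show "\<And>t i k. t \<ge> T1 \<Longrightarrow> i \<in> C \<Longrightarrow> k \<in> {1..N} - C \<Longrightarrow> \<delta> \<le> r i k t"
      using T0 unfolding T1_def by fastforce
  qed (use C i0C j0C ij0 \<delta> T1_def in auto)
  obtain c where c: "c > 0" "\<And>t. t \<ge> T1 \<Longrightarrow> c \<le> cl.S2 t" using cl.S2_lower by blast
  have "(cl.S2 \<longlongrightarrow> 0) at_top"
  proof -
    have "((\<lambda>t. \<Sum>i\<in>C. \<Sum>j\<in>C. (r i j t)\<^sup>2) \<longlongrightarrow> (\<Sum>i\<in>C. \<Sum>j\<in>C. 0\<^sup>2)) at_top"
      by (intro tendsto_sum tendsto_power inC)
    then show ?thesis unfolding cl.S2_def[abs_def] r_def by simp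
  qed
  then have "eventually (\<lambda>t. cl.S2 t < c) at_top" using c(1) by (rule order_tendstoD)
  moreover have "eventually (\<lambda>t. t \<ge> T1) at_top" by (rule eventually_ge_at_top)
  ultimately obtain t where "cl.S2 t < c" "t \<ge> T1"
    using eventually_happens'[OF trivial_limit_at_top_linorder] eventually_conj by (metis (mono_tags, lifting) eventually_at_top_linorder order_refl)
  then show False using c(2) by force
qed

lemma uniform_sep:
  "\<exists>c>0. \<forall>t\<ge>0. \<forall>i\<in>{1..N}. \<forall>j\<in>{1..N}. i \<noteq> j \<longrightarrow> c \<le> norm (q i t - q j t)"
proof -
  define I where "I = {x \<in> {1..N} \<times> {1..N}. fst x \<noteq> snd x}"
  have finI: "finite I" unfolding I_def by simp
  have "\<forall>x\<in>I. \<exists>c>0. \<forall>t\<ge>0. c \<le> r (fst x) (snd x) t"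
  proof
    fix x assume x: "x \<in> I"
    then have ij: "fst x \<in> {1..N}" "snd x \<in> {1..N}" "fst x \<noteq> snd x" unfolding I_def by auto
    have "\<not> (r (fst x) (snd x) \<longlongrightarrow> 0) at_top" using no_collapse[OF ij] by blast
    then have "\<exists>\<delta>>0. eventually (\<lambda>t. \<delta> \<le> r (fst x) (snd x) t) at_top"
      using dichotomy[OF ij(1,2)] by blast
    then show "\<exists>c>0. \<forall>t\<ge>0. c \<le> r (fst x) (snd x) t" by (rule pair_positive[OF ij])
  qed
  from finite_uniform_lower[OF finI this] obtain c where
    c: "c > 0" "\<forall>x\<in>I. \<forall>t\<ge>0. c \<le> r (fst x) (snd x) t" by blast
  show ?thesis
  proof (intro exI[of _ c] conjI allI impI ballI)
    fix t :: real and i j assume "t \<ge> 0" "i \<in> {1..N}" "j \<in> {1..N}" "i \<noteq> j"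
    then have "(i, j) \<in> I" unfolding I_def by auto
    then show "c \<le> norm (q i t - q j t)" using c(2) \<open>t \<ge> 0\<close> unfolding r_def by force
  qed (use c in auto)
qed

end

lemma g_mono_from_deriv:
  fixes g g' :: "real \<Rightarrow> real"
  assumes g_deriv: "\<And>x. x \<ge> 0 \<Longrightarrow> (g has_real_derivative g' x) (at x within {0..})"
    and g'_bounds: "\<And>R. R \<ge> 0 \<Longrightarrow> \<exists>m M. 0 < m \<and> (\<forall>x\<in>{0..R}. m \<le> g' x \<and> g' x \<le> M)"
    and R: "R \<ge> 0"
  shows "\<exists>m M. 0 < m \<and> (\<forall>a b. 0 \<le> a \<longrightarrow> a \<le> b \<longrightarrow> b \<le> R \<longrightarrow>
                 m * (b - a) \<le> g b - g a \<and> g b - g a \<le> M * (b - a))"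
proof -
  obtain m M where m: "0 < m" and mM: "\<And>x. x \<in> {0..R} \<Longrightarrow> m \<le> g' x \<and> g' x \<le> M"
    using g'_bounds[OF R] by blast
  have cont: "continuous_on {0..} g"
    by (rule DERIV_continuous_on) (use g_deriv in auto)
  have at: "(g has_real_derivative g' x) (at x)" if "x > 0" for x
  proof -
    have "(g has_real_derivative g' x) (at x within {0<..})"
      by (rule DERIV_subset[OF g_deriv]) (use that in auto)
    then show ?thesis using at_within_open[of x "{0<..}"] that by simp
  qed
  have "m * (b - a) \<le> g b - g a \<and> g b - g a \<le> M * (b - a)"
    if ab: "0 \<le> a" "a \<le> b" "b \<le> R" for a b
  proof (cases "a = b")
    case True then show ?thesis by simp
  next
    case False
    then have ab': "a < b" using ab by simp
    obtain \<xi> where xi: "a < \<xi>" "\<xi> < b" "g b - g a = (\<lambda>h. g' \<xi> * h) (b - a)"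
    proof (rule mvt[OF ab', where f' = "\<lambda>x h. g' x * h"])
      show "continuous_on {a..b} g" using cont by (rule continuous_on_subset) (use ab in auto)
      fix x assume "a < x" "x < b"
      then have "(g has_real_derivative g' x) (at x)" using ab by (intro at) auto
      then show "(g has_derivative (\<lambda>h. g' x * h)) (at x)"
        by (simp add: has_field_derivative_def)
    qed
    have b: "m \<le> g' \<xi>" "g' \<xi> \<le> M" using mM[of \<xi>] xi ab by auto
    have "m * (b - a) \<le> g' \<xi> * (b - a)" using b ab by (intro mult_right_mono) auto
    moreover have "g' \<xi> * (b - a) \<le> M * (b - a)" using b ab by (intro mult_right_mono) auto
    ultimately show ?thesis using xi(3) by simp
  qed
  then show ?thesis using m by blast
qed

theorem theorem4p1:
  fixes N :: nat and \<kappa> \<alpha> :: real and g g' :: "real \<Rightarrow> real"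
    and q p :: "nat \<Rightarrow> real \<Rightarrow> real ^ 'd"
  assumes N: "N \<ge> 1" and kappa: "\<kappa> > 0"
    and g_deriv: "\<And>x. x \<ge> 0 \<Longrightarrow> (g has_real_derivative g' x) (at x within {0..})"
    and g'_cont: "continuous_on {0..} g'"
    and g0: "g 0 = 0"
    and g'_bounds: "\<And>R. R \<ge> 0 \<Longrightarrow> \<exists>m M. 0 < m \<and> (\<forall>x\<in>{0..R}. m \<le> g' x \<and> g' x \<le> M)"
    and g_cvx: "convex_on {0<..} g \<or> concave_on {0<..} g"
    and alpha: "\<alpha> \<ge> 1" "\<alpha> \<noteq> 1"
    and sol: "cs_global_solution N \<kappa> g (psi_sing \<alpha>) q p"
    and noncoll0: "\<And>i j. i \<in> {1..N} \<Longrightarrow> j \<in> {1..N} \<Longrightarrow> i \<noteq> j \<Longrightarrow> q i 0 \<noteq> q j 0"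
    and flock_q: "\<exists>D. \<forall>t\<ge>0. \<forall>i\<in>{1..N}. \<forall>j\<in>{1..N}. norm (q i t - q j t) \<le> D"
    and flock_p: "((\<lambda>t. Max {norm (p i t - p j t) | i j. i \<in> {1..N} \<and> j \<in> {1..N}}) \<longlongrightarrow> 0) at_top"
  shows "\<exists>c>0. \<forall>t\<ge>0. \<forall>i\<in>{1..N}. \<forall>j\<in>{1..N}. i \<noteq> j \<longrightarrow> c \<le> norm (q i t - q j t)"
proof -
  interpret csm N \<kappa> \<alpha> g q p
  proof (unfold_locales)
    show "\<alpha> > 1" using alpha by simp
    show "\<And>R. R \<ge> 0 \<Longrightarrow> \<exists>m M. 0 < m \<and> (\<forall>a b. 0 \<le> a \<longrightarrow> a \<le> b \<longrightarrow> b \<le> R \<longrightarrow>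
                 m * (b - a) \<le> g b - g a \<and> g b - g a \<le> M * (b - a))"
      by (rule g_mono_from_deriv[OF g_deriv g'_bounds])
  qed (use N kappa g0 sol flock_q flock_p in auto)
  show ?thesis by (rule uniform_sep)
qed

end
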